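(* Let $A,B:[0,1]\to\mathbb{R}$ be smooth functions and consider the Abel equation $$\frac{dx}{dt}=A(t)x^3+B(t)x^2,\qquad (t,x)\in[0,1]\times\mathbb{R}.$$ Assume that there exist two real numbers $a$ and $b$ such that the function $aA(t)+bB(t)$ does not vanish identically on $[0,1]$ and does not change sign on $[0,1]$. Then the equation has at most one non-zero periodic orbit. Furthermore, when this periodic orbit exists, it is hyperbolic.
   Context: A periodic orbit of the equation is a solution $x(t)$ defined on all of $[0,1]$ with $x(0)=x(1)$; $x\equiv 0$ is always one, and a non-zero periodic orbit is one different from $x\equiv0$. The Poincaré map is $\Pi(x_0)=x(1;x_0)$, where $x(t;x_0)$ is the solution with $x(0;x_0)=x_0$ (defined for those $x_0$ whose solution exists on $[0,1]$). A periodic orbit with initial condition $x_0$ is hyperbolic if $\Pi'(x_0)\neq 1$. *)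

theory Defs
  imports "HOL-Analysis.Analysis"
begin

definition smooth01 :: "(real \<Rightarrow> real) \<Rightarrow> bool" where
  "smooth01 f \<longleftrightarrow> (\<exists>D :: nat \<Rightarrow> real \<Rightarrow> real. D 0 = f \<and>
      (\<forall>n. \<forall>t\<in>{0..1}. (D n has_real_derivative D (Suc n) t) (at t within {0..1})))"

definition abel_sol :: "(real \<Rightarrow> real) \<Rightarrow> (real \<Rightarrow> real) \<Rightarrow> (real \<Rightarrow> real) \<Rightarrow> bool" where
  "abel_sol A B x \<longleftrightarrow> (\<forall>t\<in>{0..1}.
      (x has_real_derivative (A t * (x t)^3 + B t * (x t)^2)) (at t within {0..1}))"

definition periodic_orbit :: "(real \<Rightarrow> real) \<Rightarrow> (real \<Rightarrow> real) \<Rightarrow> (real \<Rightarrow> real) \<Rightarrow> bool" where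
  "periodic_orbit A B x \<longleftrightarrow> abel_sol A B x \<and> x 0 = x 1"

definition nonzero_orbit :: "(real \<Rightarrow> real) \<Rightarrow> bool" where
  "nonzero_orbit x \<longleftrightarrow> (\<exists>t\<in>{0..1}. x t \<noteq> 0)"

definition poincare :: "(real \<Rightarrow> real) \<Rightarrow> (real \<Rightarrow> real) \<Rightarrow> real \<Rightarrow> real" where
  "poincare A B x0 = (THE y. \<exists>x. abel_sol A B x \<and> x 0 = x0 \<and> x 1 = y)"

definition hyperbolic :: "(real \<Rightarrow> real) \<Rightarrow> (real \<Rightarrow> real) \<Rightarrow> real \<Rightarrow> bool" where
  "hyperbolic A B x0 \<longleftrightarrow> (\<exists>d. (poincare A B has_real_derivative d) (at x0) \<and> d \<noteq> 1)"

end

theory Submission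
  imports Defs
begin

lemma deriv_mono01:
  fixes f f' :: "real \<Rightarrow> real"
  assumes d: "\<And>t. t \<in> {0..1} \<Longrightarrow> (f has_real_derivative f' t) (at t within {0..1})"
    and nn: "\<And>t. t \<in> {0..1} \<Longrightarrow> f' t \<ge> 0"
    and s: "s \<in> {0..1}" and u: "u \<in> {0..1}" and su: "s \<le> u"
  shows "f s \<le> f u"
proof (rule DERIV_nonneg_imp_increasing_open[OF su])
  fix x assume x: "s < x" "x < u"
  then have "0 < x" "x < 1" using s u by auto
  then have "at x within {0..1} = at x" by (rule at_within_Icc_at)
  moreover have "x \<in> {0..1}" using \<open>0 < x\<close> \<open>x < 1\<close> by simp
  ultimately have "DERIV f x :> f' x \<and> 0 \<le> f' x"
    using d[of x] nn[of x] by simp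
  then show "\<exists>y. DERIV f x :> y \<and> 0 \<le> y" by blast
next
  have "continuous_on {0..1} f" by (rule DERIV_continuous_on[OF d])
  then show "continuous_on {s..u} f"
    by (rule continuous_on_subset) (use s u in auto)
qed

lemma deriv_unique01:
  fixes f :: "real \<Rightarrow> real"
  assumes "t \<in> {0..1}"
    and "(f has_real_derivative d1) (at t within {0..1})"
    and "(f has_real_derivative d2) (at t within {0..1})"
  shows "d1 = d2"
  using vector_derivative_unique_within_closed_interval[of 0 1 t f d1 d2] assms
  by (auto simp: has_real_derivative_iff_has_vector_derivative)

lemma deriv_strict01:
  fixes f f' :: "real \<Rightarrow> real"
  assumes d: "\<And>t. t \<in> {0..1} \<Longrightarrow> (f has_real_derivative f' t) (at t within {0..1})"
    and nn: "\<And>t. t \<in> {0..1} \<Longrightarrow> f' t \<ge> 0"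
    and t0: "t0 \<in> {0..1}" "f' t0 \<noteq> 0"
  shows "f 0 < f 1"
proof -
  have le: "f 0 \<le> f 1" by (rule deriv_mono01[OF d nn]) auto
  show ?thesis
  proof (rule ccontr)
    assume "\<not> f 0 < f 1"
    with le have eq: "f 1 = f 0" by simp
    have c: "f t = f 0" if "t \<in> {0..1}" for t
    proof -
      have "f 0 \<le> f t" by (rule deriv_mono01[OF d nn]) (use that in auto)
      moreover have "f t \<le> f 1" by (rule deriv_mono01[OF d nn]) (use that in auto)
      ultimately show ?thesis using eq by simp
    qed
    have "((\<lambda>t. f 0) has_real_derivative 0) (at t0 within {0..1})" by simp
    then have "(f has_real_derivative 0) (at t0 within {0..1})"
      by (rule has_field_derivative_transform_within[where d=1]) (insert t0(1), auto intro: c[symmetric])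
    then have "f' t0 = 0" using deriv_unique01[OF t0(1) d[OF t0(1)]] by simp
    with t0 show False by simp
  qed
qed

lemma deriv_zero_const01:
  fixes f :: "real \<Rightarrow> real"
  assumes d: "\<And>t. t \<in> {0..1} \<Longrightarrow> (f has_real_derivative 0) (at t within {0..1})"
    and t: "t \<in> {0..1}"
  shows "f t = f 0"
proof -
  obtain c where "\<forall>x\<in>{0..1}. f x = c"
    using has_field_derivative_zero_constant[of "{0..1::real}" f] d by auto
  then show ?thesis using t by auto
qed

lemma lin_ode01:
  fixes w g :: "real \<Rightarrow> real"
  assumes d: "\<And>t. t \<in> {0..1} \<Longrightarrow> (w has_real_derivative w t * g t) (at t within {0..1})"
    and g: "continuous_on {0..1} g"
    and t: "t \<in> {0..1}"
  shows "w t = w 0 * exp (integral {0..t} g)"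
proof -
  define G where "G t = integral {0..t} g" for t
  have G: "(G has_real_derivative g t) (at t within {0..1})" if "t \<in> {0..1}" for t
    unfolding G_def by (rule integral_has_real_derivative[OF g that])
  have "((\<lambda>t. w t * exp (- G t)) has_real_derivative 0) (at t within {0..1})"
    if "t \<in> {0..1}" for t
  proof -
    have e: "((\<lambda>t. exp (- G t)) has_real_derivative exp (- G t) * (- g t)) (at t within {0..1})"
      using DERIV_chain2[OF DERIV_exp DERIV_minus[OF G[OF that]]] by simp
    show ?thesis using DERIV_mult[OF d[OF that] e] by (simp add: algebra_simps)
  qed
  from deriv_zero_const01[OF this t] have "w t * exp (- G t) = w 0 * exp (- G 0)" .
  moreover have "G 0 = 0" by (simp add: G_def)
  ultimately have "w t * exp (- G t) = w 0" by simp
  then have "w t * exp (- G t) * exp (G t) = w 0 * exp (G t)" by simp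
  moreover have "exp (- G t) * exp (G t) = 1" by (simp flip: exp_add)
  ultimately have "w t = w 0 * exp (G t)" by (simp add: mult.assoc)
  then show ?thesis by (simp add: G_def)
qed

lemma sol_deriv:
  assumes "abel_sol A B x" "t \<in> {0..1}"
  shows "(x has_real_derivative (A t * (x t)^3 + B t * (x t)^2)) (at t within {0..1})"
  using assms unfolding abel_sol_def by blast

lemma sol_cont:
  assumes "abel_sol A B x"
  shows "continuous_on {0..1} x"
  by (rule DERIV_continuous_on[OF sol_deriv[OF assms]])

lemma sol_diff:
  assumes cA: "continuous_on {0..1} A" and cB: "continuous_on {0..1} B"
    and x: "abel_sol A B x" and y: "abel_sol A B y" and t: "t \<in> {0..1}"
  shows "y t - x t = (y 0 - x 0) *
     exp (integral {0..t} (\<lambda>s. A s * ((x s)^2 + x s * y s + (y s)^2) + B s * (x s + y s)))"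
proof -
  have cx: "continuous_on {0..1} x" by (rule sol_cont[OF x])
  have cy: "continuous_on {0..1} y" by (rule sol_cont[OF y])
  have "(\<lambda>t. y t - x t) t = (\<lambda>t. y t - x t) 0 *
     exp (integral {0..t} (\<lambda>s. A s * ((x s)^2 + x s * y s + (y s)^2) + B s * (x s + y s)))"
  proof (rule lin_ode01[OF _ _ t])
    fix s :: real assume s: "s \<in> {0..1}"
    show "((\<lambda>t. y t - x t) has_real_derivative
        (y s - x s) * (A s * ((x s)^2 + x s * y s + (y s)^2) + B s * (x s + y s))) (at s within {0..1})"
      by (rule DERIV_cong[OF DERIV_diff[OF sol_deriv[OF y s] sol_deriv[OF x s]]])
         (simp add: algebra_simps power2_eq_square power3_eq_cube)
  next
    show "continuous_on {0..1} (\<lambda>s. A s * ((x s)^2 + x s * y s + (y s)^2) + B s * (x s + y s))"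
      by (intro continuous_intros cA cB cx cy)
  qed
  then show ?thesis by simp
qed

lemma sol_unique:
  assumes cA: "continuous_on {0..1} A" and cB: "continuous_on {0..1} B"
    and x: "abel_sol A B x" and y: "abel_sol A B y" and t: "t \<in> {0..1}" and e: "x 0 = y 0"
  shows "x t = y t"
  using sol_diff[OF cA cB x y t] e by simp

lemma sol_self:
  assumes cA: "continuous_on {0..1} A" and cB: "continuous_on {0..1} B"
    and x: "abel_sol A B x" and t: "t \<in> {0..1}"
  shows "x t = x 0 * exp (integral {0..t} (\<lambda>s. A s * (x s)^2 + B s * x s))"
proof (rule lin_ode01[OF _ _ t])
  fix s :: real assume s: "s \<in> {0..1}"
  show "(x has_real_derivative x s * (A s * (x s)^2 + B s * x s)) (at s within {0..1})"
    by (rule DERIV_cong[OF sol_deriv[OF x s]])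
       (simp add: algebra_simps power2_eq_square power3_eq_cube)
next
  show "continuous_on {0..1} (\<lambda>s. A s * (x s)^2 + B s * x s)"
    by (intro continuous_intros cA cB sol_cont[OF x])
qed

lemma orbit_nonzero:
  assumes cA: "continuous_on {0..1} A" and cB: "continuous_on {0..1} B"
    and x: "periodic_orbit A B x" and nz: "nonzero_orbit x"
  shows "x 0 \<noteq> 0" "\<And>t. t \<in> {0..1} \<Longrightarrow> x t \<noteq> 0"
    "integral {0..1} (\<lambda>s. A s * (x s)^2 + B s * x s) = 0"
proof -
  have xs: "abel_sol A B x" using x by (simp add: periodic_orbit_def)
  from nz obtain t1 where t1: "t1 \<in> {0..1}" "x t1 \<noteq> 0" by (auto simp: nonzero_orbit_def)
  show x0: "x 0 \<noteq> 0" using sol_self[OF cA cB xs t1(1)] t1(2) by auto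
  show "x t \<noteq> 0" if "t \<in> {0..1}" for t using sol_self[OF cA cB xs that] x0 by simp
  have "x 1 = x 0" using x by (simp add: periodic_orbit_def)
  then have "exp (integral {0..1} (\<lambda>s. A s * (x s)^2 + B s * x s)) = 1"
    using sol_self[OF cA cB xs, of 1] x0 by simp
  then show "integral {0..1} (\<lambda>s. A s * (x s)^2 + B s * x s) = 0" by simp
qed

lemma DERIV_ln_nz: "v \<noteq> 0 \<Longrightarrow> DERIV ln v :> 1 / v" for v :: real
proof (cases "v > 0")
  case True then show ?thesis by (rule DERIV_ln_divide)
next
  case False
  assume "v \<noteq> 0"
  with False have "- v > 0" by simp
  have "DERIV (\<lambda>u. ln (- u)) v :> 1 / (- v) * (- 1)"
    by (rule DERIV_chain2[where g="\<lambda>u. - u", OF DERIV_ln_divide[OF \<open>- v > 0\<close>]]) (rule DERIV_minus[OF DERIV_ident, simplified])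
  then show ?thesis using \<open>v \<noteq> 0\<close> by (simp add: ln_minus)
qed

definition Sfun :: "real \<Rightarrow> real \<Rightarrow> real \<Rightarrow> real" where
  "Sfun a b v = (if a = 0 then - 1 / (2 * b * v^2)
       else 1 / (a * v) - b / a^2 * ln v + b / a^2 * ln (b * v - a))"

lemma Sfun_deriv:
  assumes v: "v \<noteq> 0" and z: "b * v - a \<noteq> 0"
  shows "(Sfun a b has_real_derivative 1 / (v^2 * (b * v - a))) (at v)"
proof (cases "a = 0")
  case True
  then have b: "b \<noteq> 0" using z by auto
  have "((\<lambda>v. - 1 / (2 * b * v^2)) has_real_derivative 1 / (v^2 * (b * v - a))) (at v)"
    using v b True
    by (auto intro!: derivative_eq_intros simp: field_simps power2_eq_square power3_eq_cube)
  then show ?thesis using True by (simp add: Sfun_def[abs_def])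
next
  case False
  have d1: "((\<lambda>v. 1 / (a * v)) has_real_derivative - (1 / (a * v^2))) (at v)"
    using v False
    by (auto intro!: derivative_eq_intros simp: field_simps power2_eq_square)
  have d2: "((\<lambda>v. b / a^2 * ln v) has_real_derivative b / a^2 * (1 / v)) (at v)"
    by (rule DERIV_cmult[OF DERIV_ln_nz[OF v]])
  have d3': "((\<lambda>v. ln (b * v - a)) has_real_derivative 1 / (b * v - a) * b) (at v)"
    by (rule DERIV_chain2[where g="\<lambda>v. b * v - a", OF DERIV_ln_nz[OF z]])
       (auto intro!: derivative_eq_intros)
  have d3: "((\<lambda>v. b / a^2 * ln (b * v - a)) has_real_derivative b / a^2 * (1 / (b * v - a) * b)) (at v)"
    by (rule DERIV_cmult[OF d3'])
  have "((\<lambda>v. 1 / (a * v) - b / a^2 * ln v + b / a^2 * ln (b * v - a)) has_real_derivative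
     - (1 / (a * v^2)) - b / a^2 * (1 / v) + b / a^2 * (1 / (b * v - a) * b)) (at v)"
    by (intro DERIV_add DERIV_diff d1 d2 d3)
  moreover have "- (1 / (a * v^2)) - b / a^2 * (1 / v) + b / a^2 * (1 / (b * v - a) * b)
      = 1 / (v^2 * (b * v - a))"
    using v z False by (simp add: field_simps power2_eq_square)
  ultimately show ?thesis using False by (simp add: Sfun_def[abs_def])
qed

lemma z_sign:
  assumes cA: "continuous_on {0..1} A" and cB: "continuous_on {0..1} B"
    and hC: "\<And>t. t \<in> {0..1} \<Longrightarrow> a * A t + b * B t \<ge> 0"
    and t0: "t0 \<in> {0..1}" "a * A t0 + b * B t0 \<noteq> 0"
    and x: "periodic_orbit A B x" and nz: "nonzero_orbit x"
  shows "integral {0..1} (\<lambda>s. A s * (x s)^2) \<noteq> 0"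
    and "\<And>t. t \<in> {0..1} \<Longrightarrow> (b * x t - a) * (b * x 0 - a) > 0"
proof -
  have xs: "abel_sol A B x" using x by (simp add: periodic_orbit_def)
  have x1: "x 1 = x 0" using x by (simp add: periodic_orbit_def)
  have xnz: "x t \<noteq> 0" if "t \<in> {0..1}" for t using orbit_nonzero(2)[OF cA cB x nz that] .
  have cx: "continuous_on {0..1} x" by (rule sol_cont[OF xs])
  define H where "H t = integral {0..t} (\<lambda>s. A s * (x s)^2)" for t
  have cH: "continuous_on {0..1} (\<lambda>s. A s * (x s)^2)" by (intro continuous_intros cA cx)
  have dH: "(H has_real_derivative A t * (x t)^2) (at t within {0..1})" if "t \<in> {0..1}" for t
    unfolding H_def by (rule integral_has_real_derivative[OF cH that])
  define Z where "Z t = (b * x t - a) * exp (- H t)" for t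
  have dZ: "(Z has_real_derivative exp (- H t) * ((x t)^2 * (a * A t + b * B t))) (at t within {0..1})"
    if t: "t \<in> {0..1}" for t
  proof -
    have d1: "((\<lambda>t. b * x t - a) has_real_derivative b * (A t * (x t)^3 + B t * (x t)^2) - 0) (at t within {0..1})"
      by (rule DERIV_diff[OF DERIV_cmult[OF sol_deriv[OF xs t]] DERIV_const])
    have d2: "((\<lambda>t. exp (- H t)) has_real_derivative exp (- H t) * (- (A t * (x t)^2))) (at t within {0..1})"
      by (rule DERIV_chain2[OF DERIV_exp DERIV_minus[OF dH[OF t]]])
    show ?thesis unfolding Z_def
      by (rule DERIV_cong[OF DERIV_mult[OF d1 d2]])
         (simp add: algebra_simps power2_eq_square power3_eq_cube)
  qed
  have nn: "exp (- H t) * ((x t)^2 * (a * A t + b * B t)) \<ge> 0" if "t \<in> {0..1}" for t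
    using hC[OF that] by simp
  have pos0: "exp (- H t0) * ((x t0)^2 * (a * A t0 + b * B t0)) \<noteq> 0"
    using t0 xnz[OF t0(1)] by simp
  have lt: "Z 0 < Z 1" by (rule deriv_strict01[OF dZ nn t0(1) pos0])
  have H0: "H 0 = 0" by (simp add: H_def)
  have Z0: "Z 0 = b * x 0 - a" by (simp add: Z_def H0)
  have Z1: "Z 1 = (b * x 0 - a) * exp (- H 1)" by (simp add: Z_def x1)
  show "integral {0..1} (\<lambda>s. A s * (x s)^2) \<noteq> 0"
  proof
    assume "integral {0..1} (\<lambda>s. A s * (x s)^2) = 0"
    then have "H 1 = 0" by (simp add: H_def)
    then show False using lt Z0 Z1 by simp
  qed
  fix t :: real assume t: "t \<in> {0..1}"
  have mono1: "Z 0 \<le> Z t" by (rule deriv_mono01[OF dZ nn]) (use t in auto)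
  have mono2: "Z t \<le> Z 1" by (rule deriv_mono01[OF dZ nn]) (use t in auto)
  have Et: "exp (- H t) > 0" by simp
  show "(b * x t - a) * (b * x 0 - a) > 0"
  proof (cases "b * x 0 - a > 0")
    case True
    then have "Z t > 0" using mono1 Z0 by simp
    then have "b * x t - a > 0" using Et unfolding Z_def by (simp add: zero_less_mult_iff)
    then show ?thesis using True by simp
  next
    case False
    have "b * x 0 - a \<noteq> 0" using lt Z0 Z1 by auto
    with False have neg: "b * x 0 - a < 0" by simp
    have "Z 1 < 0" using neg Z1 by (simp add: mult_neg_pos)
    then have "Z t < 0" using mono2 by simp
    then have "b * x t - a < 0" using Et unfolding Z_def by (simp add: mult_less_0_iff)
    then show ?thesis using neg by (simp add: mult_neg_neg)
  qed
qed

lemma orbit_unique: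
  assumes cA: "continuous_on {0..1} A" and cB: "continuous_on {0..1} B"
    and hC: "\<And>t. t \<in> {0..1} \<Longrightarrow> a * A t + b * B t \<ge> 0"
    and t0: "t0 \<in> {0..1}" "a * A t0 + b * B t0 \<noteq> 0"
    and x: "periodic_orbit A B x" and nzx: "nonzero_orbit x"
    and y: "periodic_orbit A B y" and nzy: "nonzero_orbit y"
    and t: "t \<in> {0..1}"
  shows "x t = y t"
proof (rule ccontr)
  assume ne: "x t \<noteq> y t"
  have xs: "abel_sol A B x" and x1: "x 1 = x 0" using x by (auto simp: periodic_orbit_def)
  have ys: "abel_sol A B y" and y1: "y 1 = y 0" using y by (auto simp: periodic_orbit_def)
  have d0: "y 0 - x 0 \<noteq> 0" using sol_unique[OF cA cB xs ys t] ne by auto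
  have dsign: "(y s - x s) * (y 0 - x 0) > 0" if s: "s \<in> {0..1}" for s
  proof -
    have "(y s - x s) * (y 0 - x 0) = (y 0 - x 0)^2 *
     exp (integral {0..s} (\<lambda>s. A s * ((x s)^2 + x s * y s + (y s)^2) + B s * (x s + y s)))"
      using sol_diff[OF cA cB xs ys s] by (simp add: power2_eq_square)
    then show ?thesis using d0 by simp
  qed
  have zx: "(b * x s - a) * (b * x 0 - a) > 0" if "s \<in> {0..1}" for s
    by (rule z_sign(2)[OF cA cB hC t0 x nzx that])
  have zy: "(b * y s - a) * (b * y 0 - a) > 0" if "s \<in> {0..1}" for s
    by (rule z_sign(2)[OF cA cB hC t0 y nzy that])
  have xnz: "x s \<noteq> 0" if "s \<in> {0..1}" for s using orbit_nonzero(2)[OF cA cB x nzx that] .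
  have ynz: "y s \<noteq> 0" if "s \<in> {0..1}" for s using orbit_nonzero(2)[OF cA cB y nzy that] .
  have zxnz: "b * x s - a \<noteq> 0" if "s \<in> {0..1}" for s using zx[OF that] by auto
  have zynz: "b * y s - a \<noteq> 0" if "s \<in> {0..1}" for s using zy[OF that] by auto
  define q where "q s = (y s - x s) / ((b * x s - a) * (b * y s - a))" for s
  have qpos: "q s * q 0 > 0" if s: "s \<in> {0..1}" for s
  proof -
    have "q s * q 0 = ((y s - x s) * (y 0 - x 0)) /
        (((b * x s - a) * (b * x 0 - a)) * ((b * y s - a) * (b * y 0 - a)))"
      unfolding q_def by (simp add: field_simps)
    also have "\<dots> > 0" using dsign[OF s] zx[OF s] zy[OF s] by simp
    finally show ?thesis .
  qed
  define D where "D s = q 0 * (Sfun a b (x s) - Sfun a b (y s))" for s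
  have dD: "(D has_real_derivative q 0 * ((a * A s + b * B s) * q s)) (at s within {0..1})"
    if s: "s \<in> {0..1}" for s
  proof -
    have dx: "((\<lambda>s. Sfun a b (x s)) has_real_derivative
        1 / ((x s)^2 * (b * x s - a)) * (A s * (x s)^3 + B s * (x s)^2)) (at s within {0..1})"
      by (rule DERIV_chain2[OF Sfun_deriv[OF xnz[OF s] zxnz[OF s]] sol_deriv[OF xs s]])
    have dy: "((\<lambda>s. Sfun a b (y s)) has_real_derivative
        1 / ((y s)^2 * (b * y s - a)) * (A s * (y s)^3 + B s * (y s)^2)) (at s within {0..1})"
      by (rule DERIV_chain2[OF Sfun_deriv[OF ynz[OF s] zynz[OF s]] sol_deriv[OF ys s]])
    have eq: "1 / ((x s)^2 * (b * x s - a)) * (A s * (x s)^3 + B s * (x s)^2)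
       - 1 / ((y s)^2 * (b * y s - a)) * (A s * (y s)^3 + B s * (y s)^2)
       = (a * A s + b * B s) * q s"
    proof -
      have e1: "1 / ((x s)^2 * (b * x s - a)) * (A s * (x s)^3 + B s * (x s)^2)
          = (A s * x s + B s) / (b * x s - a)"
        using xnz[OF s] zxnz[OF s] by (simp add: field_simps power2_eq_square power3_eq_cube)
      have e2: "1 / ((y s)^2 * (b * y s - a)) * (A s * (y s)^3 + B s * (y s)^2)
          = (A s * y s + B s) / (b * y s - a)"
        using ynz[OF s] zynz[OF s] by (simp add: field_simps power2_eq_square power3_eq_cube)
      have e3: "(A s * x s + B s) / (b * x s - a) - (A s * y s + B s) / (b * y s - a)
          = ((A s * x s + B s) * (b * y s - a) - (A s * y s + B s) * (b * x s - a))
            / ((b * x s - a) * (b * y s - a))"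
        using zxnz[OF s] zynz[OF s] by (simp add: diff_frac_eq)
      have e4: "(A s * x s + B s) * (b * y s - a) - (A s * y s + B s) * (b * x s - a)
          = (a * A s + b * B s) * (y s - x s)"
        by (simp add: algebra_simps)
      show ?thesis unfolding e1 e2 e3 e4 q_def by simp
    qed
    show ?thesis unfolding D_def
      by (rule DERIV_cong[OF DERIV_cmult[OF DERIV_diff[OF dx dy]]]) (simp only: eq)
  qed
  have nn: "q 0 * ((a * A s + b * B s) * q s) \<ge> 0" if s: "s \<in> {0..1}" for s
  proof -
    have "q 0 * ((a * A s + b * B s) * q s) = (a * A s + b * B s) * (q s * q 0)" by simp
    also have "\<dots> \<ge> 0" using hC[OF s] qpos[OF s] by simp
    finally show ?thesis .
  qed
  have nz0: "q 0 * ((a * A t0 + b * B t0) * q t0) \<noteq> 0"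
    using t0 qpos[OF t0(1)] by auto
  have "D 0 < D 1" by (rule deriv_strict01[OF dD nn t0(1) nz0])
  moreover have "D 1 = D 0" by (simp add: D_def x1 y1)
  ultimately show False by simp
qed

definition clampR :: "real \<Rightarrow> real \<Rightarrow> real" where
  "clampR R v = max (- R) (min R v)"

definition Fm :: "(real \<Rightarrow> real) \<Rightarrow> (real \<Rightarrow> real) \<Rightarrow> real \<Rightarrow> real \<Rightarrow> real \<Rightarrow> real" where
  "Fm A B R s v = A s * (clampR R v)^3 + B s * (clampR R v)^2"

lemma clamp_abs: "R \<ge> 0 \<Longrightarrow> \<bar>clampR R v\<bar> \<le> R"
  by (simp add: clampR_def)

lemma clamp_lip: "\<bar>clampR R v - clampR R w\<bar> \<le> \<bar>v - w\<bar>"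
  by (simp add: clampR_def)

lemma clamp_id: "\<bar>v\<bar> \<le> R \<Longrightarrow> clampR R v = v"
  by (simp add: clampR_def)

lemma cube_lip:
  fixes p q R :: real
  assumes "\<bar>p\<bar> \<le> R" "\<bar>q\<bar> \<le> R"
  shows "\<bar>p^3 - q^3\<bar> \<le> 3 * R^2 * \<bar>p - q\<bar>"
proof -
  have R: "R \<ge> 0" using assms by linarith
  have h1: "\<bar>p\<bar> * \<bar>q\<bar> \<le> R * R" by (rule mult_mono) (use assms R in auto)
  have h2: "\<bar>p\<bar> * \<bar>p\<bar> \<le> R * R" by (rule mult_mono) (use assms R in auto)
  have h3: "\<bar>q\<bar> * \<bar>q\<bar> \<le> R * R" by (rule mult_mono) (use assms R in auto)
  have t: "\<bar>p * p + p * q + q * q\<bar> \<le> \<bar>p * p\<bar> + \<bar>p * q\<bar> + \<bar>q * q\<bar>"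
    using abs_triangle_ineq[of "p * p + p * q" "q * q"] abs_triangle_ineq[of "p * p" "p * q"]
    by linarith
  have t2: "\<bar>p * p + p * q + q * q\<bar> \<le> 3 * R^2"
    using t h1 h2 h3 by (simp add: abs_mult power2_eq_square)
  have "p^3 - q^3 = (p - q) * (p * p + p * q + q * q)"
    by (simp add: algebra_simps power3_eq_cube)
  then have "\<bar>p^3 - q^3\<bar> = \<bar>p - q\<bar> * \<bar>p * p + p * q + q * q\<bar>" by (simp add: abs_mult)
  also have "\<dots> \<le> \<bar>p - q\<bar> * (3 * R^2)" by (rule mult_left_mono[OF t2]) simp
  finally show ?thesis by (simp add: mult.commute)
qed

lemma sq_lip:
  fixes p q R :: real
  assumes "\<bar>p\<bar> \<le> R" "\<bar>q\<bar> \<le> R"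
  shows "\<bar>p^2 - q^2\<bar> \<le> 2 * R * \<bar>p - q\<bar>"
proof -
  have "p^2 - q^2 = (p - q) * (p + q)" by (simp add: algebra_simps power2_eq_square)
  then have "\<bar>p^2 - q^2\<bar> = \<bar>p - q\<bar> * \<bar>p + q\<bar>" by (simp add: abs_mult)
  also have "\<dots> \<le> \<bar>p - q\<bar> * (2 * R)" by (rule mult_left_mono) (use assms in auto)
  finally show ?thesis by (simp add: mult.commute)
qed

lemma Fm_lip:
  assumes R: "R \<ge> 0" and a: "\<bar>A s\<bar> \<le> MA" and b: "\<bar>B s\<bar> \<le> MB"
  shows "\<bar>Fm A B R s v - Fm A B R s w\<bar> \<le> (3 * MA * R^2 + 2 * MB * R) * \<bar>v - w\<bar>"
proof -
  let ?p = "clampR R v" and ?q = "clampR R w"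
  have p: "\<bar>?p\<bar> \<le> R" and q: "\<bar>?q\<bar> \<le> R" using clamp_abs[OF R] by auto
  have MA: "MA \<ge> 0" and MB: "MB \<ge> 0" using a b by linarith+
  have "Fm A B R s v - Fm A B R s w = A s * (?p^3 - ?q^3) + B s * (?p^2 - ?q^2)"
    by (simp add: Fm_def algebra_simps)
  then have "\<bar>Fm A B R s v - Fm A B R s w\<bar> \<le> \<bar>A s\<bar> * \<bar>?p^3 - ?q^3\<bar> + \<bar>B s\<bar> * \<bar>?p^2 - ?q^2\<bar>"
    by (metis abs_mult abs_triangle_ineq)
  also have "\<dots> \<le> MA * (3 * R^2 * \<bar>?p - ?q\<bar>) + MB * (2 * R * \<bar>?p - ?q\<bar>)"
    by (intro add_mono mult_mono a b cube_lip[OF p q] sq_lip[OF p q]) (use MA MB in auto)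
  also have "\<dots> \<le> MA * (3 * R^2 * \<bar>v - w\<bar>) + MB * (2 * R * \<bar>v - w\<bar>)"
    by (intro add_mono mult_left_mono clamp_lip) (use MA MB R in auto)
  finally show ?thesis by (simp add: algebra_simps)
qed

lemma Fm_bound:
  assumes R: "R \<ge> 0" and a: "\<bar>A s\<bar> \<le> MA" and b: "\<bar>B s\<bar> \<le> MB"
  shows "\<bar>Fm A B R s v\<bar> \<le> MA * R^3 + MB * R^2"
proof -
  let ?p = "clampR R v"
  have p: "\<bar>?p\<bar> \<le> R" using clamp_abs[OF R] by auto
  have MA: "MA \<ge> 0" and MB: "MB \<ge> 0" using a b by linarith+
  have p3: "\<bar>?p\<bar>^3 \<le> R^3" by (rule power_mono[OF p]) simp
  have p2: "\<bar>?p\<bar>^2 \<le> R^2" by (rule power_mono[OF p]) simp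
  have "\<bar>Fm A B R s v\<bar> \<le> \<bar>A s\<bar> * \<bar>?p\<bar>^3 + \<bar>B s\<bar> * \<bar>?p\<bar>^2"
    unfolding Fm_def by (metis abs_mult abs_triangle_ineq power_abs)
  also have "\<dots> \<le> MA * R^3 + MB * R^2"
    by (intro add_mono mult_mono a b p3 p2) (use MA MB in auto)
  finally show ?thesis .
qed

lemma Fm_cont:
  assumes cA: "continuous_on {0..1} A" and cB: "continuous_on {0..1} B"
    and c: "continuous_on {0..1} \<phi>"
  shows "continuous_on {0..1} (\<lambda>s. Fm A B R s (\<phi> s))"
  unfolding Fm_def clampR_def by (intro continuous_intros cA cB c)

lemma cont_bound:
  fixes f :: "real \<Rightarrow> real"
  assumes "continuous_on {0..1} f"
  shows "\<exists>M\<ge>0. \<forall>s\<in>{0..1}. \<bar>f s\<bar> \<le> M"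
proof -
  have "bounded (f ` {0..1})"
    by (rule compact_imp_bounded[OF compact_continuous_image[OF assms compact_Icc]])
  then obtain M where "\<forall>y\<in>f ` {0..1}. norm y \<le> M" by (auto simp: bounded_iff)
  then have "\<forall>s\<in>{0..1}. \<bar>f s\<bar> \<le> max M 0" by auto
  then show ?thesis by (intro exI[of _ "max M 0"]) auto
qed

lemma exp_integral:
  fixes K u :: real
  assumes K: "K > 0" and u: "u \<ge> 0"
  shows "integral {0..u} (\<lambda>s. exp (K * s)) = (exp (K * u) - 1) / K"
proof -
  have "((\<lambda>s. exp (K * s)) has_integral ((\<lambda>s. exp (K * s) / K) u - (\<lambda>s. exp (K * s) / K) 0)) {0..u}"
  proof (rule fundamental_theorem_of_calculus[OF u])
    fix s :: real assume "s \<in> {0..u}"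
    have "((\<lambda>s. exp (K * s) / K) has_real_derivative exp (K * s)) (at s within {0..u})"
      using K by (auto intro!: derivative_eq_intros)
    then show "((\<lambda>s. exp (K * s) / K) has_vector_derivative exp (K * s)) (at s within {0..u})"
      by (simp add: has_real_derivative_iff_has_vector_derivative)
  qed
  then show ?thesis using K by (simp add: integral_unique diff_divide_distrib)
qed

lemma picard_exists:
  assumes cA: "continuous_on {0..1} A" and cB: "continuous_on {0..1} B" and R: "R \<ge> 0"
  shows "\<exists>y. y 0 = x0 \<and> (\<forall>t\<in>{0..1}. (y has_real_derivative Fm A B R t (y t)) (at t within {0..1}))"
proof -
  obtain MA where MA: "MA \<ge> 0" "\<forall>s\<in>{0..1}. \<bar>A s\<bar> \<le> MA" using cont_bound[OF cA] by auto
  obtain MB where MB: "MB \<ge> 0" "\<forall>s\<in>{0..1}. \<bar>B s\<bar> \<le> MB" using cont_bound[OF cB] by auto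
  define L where "L = 3 * MA * R^2 + 2 * MB * R + 1"
  have L: "L > 0" using MA MB R unfolding L_def by (simp add: add_nonneg_pos)
  define K where "K = 2 * L"
  have K: "K > 0" using L by (simp add: K_def)
  define M where "M = MA * R^3 + MB * R^2"
  have lip: "\<bar>Fm A B R s v - Fm A B R s w\<bar> \<le> L * \<bar>v - w\<bar>" if "s \<in> {0..1}" for s v w
  proof -
    have "\<bar>Fm A B R s v - Fm A B R s w\<bar> \<le> (3 * MA * R^2 + 2 * MB * R) * \<bar>v - w\<bar>"
      using Fm_lip[OF R, of A s MA B MB v w] MA MB that by auto
    also have "\<dots> \<le> L * \<bar>v - w\<bar>" unfolding L_def by (intro mult_right_mono) auto
    finally show ?thesis .
  qed
  have bnd: "\<bar>Fm A B R s v\<bar> \<le> M" if "s \<in> {0..1}" for s v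
    unfolding M_def using Fm_bound[OF R, of A s MA B MB v] MA MB that by auto
  have M0: "M \<ge> 0" using bnd[of 0 0] by simp
  define tau where "tau t = max 0 (min 1 t)" for t :: real
  have tau01: "tau t \<in> {0..1}" for t by (simp add: tau_def)
  have tau_id: "tau t = t" if "t \<in> {0..1}" for t using that by (simp add: tau_def)
  have ctau: "continuous_on UNIV tau" unfolding tau_def by (intro continuous_intros)
  define h where "h \<phi> s = Fm A B R s (exp (K * s) * \<phi> s)" for \<phi> :: "real \<Rightarrow> real" and s
  define P where "P \<phi> t = exp (- (K * tau t)) * (x0 + integral {0..tau t} (h \<phi>))" for \<phi> t
  have hcont: "continuous_on {0..1} (h \<phi>)" if "continuous_on UNIV \<phi>" for \<phi>
  proof -
    have "continuous_on {0..1} \<phi>" by (rule continuous_on_subset[OF that]) simp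
    then have "continuous_on {0..1} (\<lambda>s. exp (K * s) * \<phi> s)" by (intro continuous_intros)
    then show ?thesis unfolding h_def by (rule Fm_cont[OF cA cB])
  qed
  have hint: "h \<phi> integrable_on {0..u}" if "continuous_on UNIV \<phi>" "u \<in> {0..1}" for \<phi> u
    by (rule integrable_continuous_interval[OF continuous_on_subset[OF hcont[OF that(1)]]])
       (use that(2) in auto)
  have ibnd: "\<bar>integral {0..u} (h \<phi>)\<bar> \<le> M" if "continuous_on UNIV \<phi>" "u \<in> {0..1}" for \<phi> u
  proof -
    have "norm (integral {0..u} (h \<phi>)) \<le> integral {0..u} (\<lambda>_. M)"
      by (rule integral_norm_bound_integral[OF hint[OF that]])
         (use that(2) bnd in \<open>auto simp: h_def\<close>)
    also have "\<dots> = u * M" using that(2) by simp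
    also have "\<dots> \<le> M" using that(2) M0 by (simp add: mult_left_le_one_le)
    finally show ?thesis by simp
  qed
  have Pbc: "P \<phi> \<in> bcontfun" if c: "continuous_on UNIV \<phi>" for \<phi>
  proof (rule bcontfun_normI)
    have cI: "continuous_on {0..1} (\<lambda>u. integral {0..u} (h \<phi>))"
      by (rule DERIV_continuous_on[OF integral_has_real_derivative[OF hcont[OF c]]])
    have "continuous_on UNIV (\<lambda>t. integral {0..tau t} (h \<phi>))"
      by (rule continuous_on_compose2[OF cI ctau]) (use tau01 in auto)
    then show "continuous_on UNIV (P \<phi>)" unfolding P_def by (intro continuous_intros ctau)
    fix t
    have e1: "exp (- (K * tau t)) \<le> 1" using K tau01[of t] by simp
    have "\<bar>x0 + integral {0..tau t} (h \<phi>)\<bar> \<le> \<bar>x0\<bar> + M"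
      using ibnd[OF c tau01[of t]] by linarith
    then have "exp (- (K * tau t)) * \<bar>x0 + integral {0..tau t} (h \<phi>)\<bar> \<le> 1 * (\<bar>x0\<bar> + M)"
      by (intro mult_mono e1) auto
    then show "norm (P \<phi> t) \<le> \<bar>x0\<bar> + M" unfolding P_def by (simp add: abs_mult)
  qed
  define T where "T v = Bcontfun (P (apply_bcontfun v))" for v :: "real \<Rightarrow>\<^sub>C real"
  have Tapp: "apply_bcontfun (T v) = P (apply_bcontfun v)" for v
    unfolding T_def by (rule Bcontfun_inverse[OF Pbc]) simp
  have contr: "dist (T v) (T w) \<le> 1/2 * dist v w" for v w
  proof (rule dist_bound)
    fix t
    define d where "d = dist v w"
    define u where "u = tau t"
    have u: "u \<in> {0..1}" unfolding u_def by (rule tau01)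
    have vw: "\<bar>apply_bcontfun v s - apply_bcontfun w s\<bar> \<le> d" for s
      using dist_bounded[of v s w] by (simp add: d_def dist_real_def)
    have d0: "d \<ge> 0" by (simp add: d_def)
    have cv: "continuous_on UNIV (apply_bcontfun v)" and cw: "continuous_on UNIV (apply_bcontfun w)"
      by auto
    have diff: "P (apply_bcontfun v) t - P (apply_bcontfun w) t =
       exp (- (K * u)) * integral {0..u} (\<lambda>s. h (apply_bcontfun v) s - h (apply_bcontfun w) s)"
    proof -
      have eqd: "integral {0..u} (\<lambda>s. h (apply_bcontfun v) s - h (apply_bcontfun w) s)
          = integral {0..u} (h (apply_bcontfun v)) - integral {0..u} (h (apply_bcontfun w))"
        by (rule Henstock_Kurzweil_Integration.integral_diff[OF hint[OF cv u] hint[OF cw u]])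
      show ?thesis unfolding P_def u_def[symmetric] eqd by (simp add: algebra_simps)
    qed
    have pt: "\<bar>h (apply_bcontfun v) s - h (apply_bcontfun w) s\<bar> \<le> L * d * exp (K * s)"
      if s: "s \<in> {0..u}" for s
    proof -
      have s01: "s \<in> {0..1}" using s u by auto
      have "\<bar>h (apply_bcontfun v) s - h (apply_bcontfun w) s\<bar>
          \<le> L * \<bar>exp (K * s) * apply_bcontfun v s - exp (K * s) * apply_bcontfun w s\<bar>"
        unfolding h_def by (rule lip[OF s01])
      also have "\<dots> = L * (exp (K * s) * \<bar>apply_bcontfun v s - apply_bcontfun w s\<bar>)"
        by (simp add: abs_mult right_diff_distrib[symmetric])
      also have "\<dots> \<le> L * (exp (K * s) * d)"
        using L vw[of s] by (intro mult_left_mono) auto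
      finally show ?thesis by (simp add: algebra_simps)
    qed
    have int2: "(\<lambda>s. h (apply_bcontfun v) s - h (apply_bcontfun w) s) integrable_on {0..u}"
      by (intro integrable_diff hint cv cw u)
    have int3: "(\<lambda>s. L * d * exp (K * s)) integrable_on {0..u}"
      by (intro integrable_continuous_interval continuous_intros)
    have "norm (integral {0..u} (\<lambda>s. h (apply_bcontfun v) s - h (apply_bcontfun w) s))
        \<le> integral {0..u} (\<lambda>s. L * d * exp (K * s))"
      by (rule integral_norm_bound_integral[OF int2 int3]) (use pt in auto)
    also have "\<dots> = L * d * ((exp (K * u) - 1) / K)"
      using exp_integral[OF K, of u] u by simp
    finally have ib: "\<bar>integral {0..u} (\<lambda>s. h (apply_bcontfun v) s - h (apply_bcontfun w) s)\<bar>
        \<le> L * d * ((exp (K * u) - 1) / K)" by simp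
    have "\<bar>P (apply_bcontfun v) t - P (apply_bcontfun w) t\<bar>
        \<le> exp (- (K * u)) * (L * d * ((exp (K * u) - 1) / K))"
      unfolding diff abs_mult abs_exp_cancel by (intro mult_left_mono ib) simp
    also have "\<dots> = L * d * (1 - exp (- (K * u))) / K"
      by (simp add: field_simps exp_minus)
    also have "\<dots> \<le> L * d * 1 / K"
      using L d0 K by (intro divide_right_mono mult_left_mono) auto
    also have "\<dots> = 1/2 * d" using L by (simp add: K_def)
    finally show "dist (apply_bcontfun (T v) t) (apply_bcontfun (T w) t) \<le> 1/2 * dist v w"
      by (simp add: Tapp dist_real_def d_def)
  qed
  obtain v where v: "T v = v"
    using banach_fix_type[of "1/2" T] contr by auto
  define y where "y t = exp (K * t) * apply_bcontfun v t" for t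
  have yrep: "y t = x0 + integral {0..t} (\<lambda>s. Fm A B R s (y s))" if t: "t \<in> {0..1}" for t
  proof -
    have "apply_bcontfun v t = P (apply_bcontfun v) t" using Tapp[of v] v by simp
    then have "y t = exp (K * t) * (exp (- (K * t)) * (x0 + integral {0..t} (h (apply_bcontfun v))))"
      unfolding y_def P_def tau_id[OF t] by simp
    also have "\<dots> = x0 + integral {0..t} (h (apply_bcontfun v))"
      by (simp add: mult.assoc[symmetric] exp_minus)
    finally show ?thesis by (simp add: h_def[abs_def] y_def[abs_def])
  qed
  have cv: "continuous_on UNIV (apply_bcontfun v)" by auto
  have hy: "h (apply_bcontfun v) = (\<lambda>s. Fm A B R s (y s))" by (simp add: h_def[abs_def] y_def[abs_def])
  have cF: "continuous_on {0..1} (\<lambda>s. Fm A B R s (y s))" using hcont[OF cv] hy by simp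
  show ?thesis
  proof (intro exI conjI ballI)
    show "y 0 = x0" using yrep[of 0] by simp
    fix t :: real assume t: "t \<in> {0..1}"
    have "((\<lambda>t. x0 + integral {0..t} (\<lambda>s. Fm A B R s (y s))) has_real_derivative
        0 + Fm A B R t (y t)) (at t within {0..1})"
      by (intro DERIV_add DERIV_const integral_has_real_derivative[OF cF t])
    then have "((\<lambda>t. x0 + integral {0..t} (\<lambda>s. Fm A B R s (y s))) has_real_derivative
        Fm A B R t (y t)) (at t within {0..1})" by simp
    then show "(y has_real_derivative Fm A B R t (y t)) (at t within {0..1})"
      by (rule has_field_derivative_transform_within[where d=1]) (use t yrep in auto)
  qed
qed

lemma near_solution:
  assumes cA: "continuous_on {0..1} A" and cB: "continuous_on {0..1} B"
    and xs: "abel_sol A B x"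
  shows "\<exists>\<eta>>0. \<exists>C\<ge>0. \<exists>R. \<forall>x0. \<bar>x0 - x 0\<bar> < \<eta> \<longrightarrow> (\<exists>y. abel_sol A B y \<and> y 0 = x0 \<and>
     (\<forall>t\<in>{0..1}. \<bar>y t - x t\<bar> \<le> C * \<bar>x0 - x 0\<bar> \<and> \<bar>y t\<bar> \<le> R \<and> \<bar>x t\<bar> \<le> R))"
proof -
  have cx: "continuous_on {0..1} x" by (rule sol_cont[OF xs])
  obtain Mx where Mx: "Mx \<ge> 0" "\<forall>s\<in>{0..1}. \<bar>x s\<bar> \<le> Mx" using cont_bound[OF cx] by auto
  define R where "R = Mx + 1"
  have R: "R \<ge> 0" using Mx by (simp add: R_def)
  obtain MA where MA: "MA \<ge> 0" "\<forall>s\<in>{0..1}. \<bar>A s\<bar> \<le> MA" using cont_bound[OF cA] by auto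
  obtain MB where MB: "MB \<ge> 0" "\<forall>s\<in>{0..1}. \<bar>B s\<bar> \<le> MB" using cont_bound[OF cB] by auto
  define L where "L = 3 * MA * R^2 + 2 * MB * R + 1"
  have L: "L > 0" using MA MB R unfolding L_def by (simp add: add_nonneg_pos)
  have lip: "\<bar>Fm A B R s v - Fm A B R s w\<bar> \<le> L * \<bar>v - w\<bar>" if "s \<in> {0..1}" for s v w
  proof -
    have "\<bar>Fm A B R s v - Fm A B R s w\<bar> \<le> (3 * MA * R^2 + 2 * MB * R) * \<bar>v - w\<bar>"
      using Fm_lip[OF R, of A s MA B MB v w] MA MB that by auto
    also have "\<dots> \<le> L * \<bar>v - w\<bar>" unfolding L_def by (intro mult_right_mono) auto
    finally show ?thesis .
  qed
  have fx: "A s * (x s)^3 + B s * (x s)^2 = Fm A B R s (x s)" if "s \<in> {0..1}" for s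
  proof -
    have "\<bar>x s\<bar> \<le> Mx" using Mx(2) that by blast
    then have "\<bar>x s\<bar> \<le> R" by (simp add: R_def)
    then show ?thesis by (simp add: Fm_def clamp_id)
  qed
  have main: "\<exists>y. abel_sol A B y \<and> y 0 = x0 \<and>
      (\<forall>t\<in>{0..1}. \<bar>y t - x t\<bar> \<le> exp L * \<bar>x0 - x 0\<bar> \<and> \<bar>y t\<bar> \<le> R \<and> \<bar>x t\<bar> \<le> R)"
    if x0: "\<bar>x0 - x 0\<bar> < exp (- L)" for x0
  proof -
    obtain y where y0: "y 0 = x0"
      and dy: "\<And>t. t \<in> {0..1} \<Longrightarrow> (y has_real_derivative Fm A B R t (y t)) (at t within {0..1})"
      using picard_exists[OF cA cB R, of x0] by auto
    define W where "W t = ((y t - x t) * (y t - x t)) * exp (- (2 * L * t))" for t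
    define W' where "W' t = exp (- (2 * L * t)) *
        (2 * ((y t - x t) * (Fm A B R t (y t) - Fm A B R t (x t))) - 2 * L * ((y t - x t) * (y t - x t)))" for t
    have dW: "((\<lambda>t. - W t) has_real_derivative - W' t) (at t within {0..1})" if t: "t \<in> {0..1}" for t
    proof -
      have dd: "((\<lambda>t. y t - x t) has_real_derivative Fm A B R t (y t) - Fm A B R t (x t)) (at t within {0..1})"
        using DERIV_diff[OF dy[OF t] sol_deriv[OF xs t]] fx[OF t] by simp
      have de: "((\<lambda>t. exp (- (2 * L * t))) has_real_derivative exp (- (2 * L * t)) * (- (2 * L * 1))) (at t within {0..1})"
        by (rule DERIV_chain2[OF DERIV_exp DERIV_minus[OF DERIV_cmult[OF DERIV_ident]]])
      show ?thesis unfolding W_def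
        by (rule DERIV_cong[OF DERIV_minus[OF DERIV_mult[OF DERIV_mult[OF dd dd] de]]])
           (simp add: W'_def algebra_simps)
    qed
    have W'nn: "- W' t \<ge> 0" if t: "t \<in> {0..1}" for t
    proof -
      let ?d = "y t - x t" and ?D = "Fm A B R t (y t) - Fm A B R t (x t)"
      have "?d * ?D \<le> \<bar>?d\<bar> * \<bar>?D\<bar>" by (metis abs_ge_self abs_mult)
      also have "\<dots> \<le> \<bar>?d\<bar> * (L * \<bar>?d\<bar>)" by (intro mult_left_mono lip[OF t]) simp
      also have "\<dots> = L * (?d * ?d)" by (simp add: abs_mult_self_eq algebra_simps)
      finally have "?d * ?D \<le> L * (?d * ?d)" .
      then have "2 * (?d * ?D) - 2 * L * (?d * ?d) \<le> 0" by simp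
      then have "W' t \<le> 0" unfolding W'_def by (simp add: mult_nonneg_nonpos)
      then show ?thesis by simp
    qed
    have est: "\<bar>y t - x t\<bar> \<le> exp L * \<bar>x0 - x 0\<bar>" if t: "t \<in> {0..1}" for t
    proof -
      have "- W 0 \<le> - W t" by (rule deriv_mono01[OF dW W'nn]) (use t in auto)
      then have "W t \<le> W 0" by simp
      also have "W 0 = (x0 - x 0) * (x0 - x 0)" by (simp add: W_def y0)
      finally have w: "(y t - x t) * (y t - x t) * exp (- (2 * L * t)) \<le> (x0 - x 0) * (x0 - x 0)"
        by (simp add: W_def)
      have "(y t - x t) * (y t - x t) = ((y t - x t) * (y t - x t) * exp (- (2 * L * t))) * exp (2 * L * t)"
        by (simp add: mult.assoc flip: exp_add)
      also have "\<dots> \<le> (x0 - x 0) * (x0 - x 0) * exp (2 * L * t)"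
        by (intro mult_right_mono w) simp
      also have "\<dots> \<le> (x0 - x 0) * (x0 - x 0) * exp (2 * L)"
        using t L by (intro mult_left_mono) auto
      also have "\<dots> = (exp L * \<bar>x0 - x 0\<bar>)^2"
      proof -
        have e2: "exp (2 * L) = exp L * exp L" by (simp only: mult_2 exp_add)
        have "(exp L * \<bar>x0 - x 0\<bar>)^2 = (exp L * exp L) * (\<bar>x0 - x 0\<bar> * \<bar>x0 - x 0\<bar>)"
          by (simp only: power2_eq_square mult_ac)
        then have "(exp L * \<bar>x0 - x 0\<bar>)^2 = (exp L * exp L) * ((x0 - x 0) * (x0 - x 0))"
          by (simp only: abs_mult_self_eq)
        then show ?thesis by (simp add: e2)
      qed
      finally have "\<bar>y t - x t\<bar>^2 \<le> (exp L * \<bar>x0 - x 0\<bar>)^2" by (simp add: power2_eq_square abs_mult_self_eq)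
      then show ?thesis by (rule power2_le_imp_le) simp
    qed
    have small: "exp L * \<bar>x0 - x 0\<bar> < 1"
    proof -
      have "exp L * \<bar>x0 - x 0\<bar> < exp L * exp (- L)" using x0 by simp
      also have "\<dots> = 1" by (simp flip: exp_add)
      finally show ?thesis .
    qed
    have ybnd: "\<bar>y t\<bar> \<le> R" if t: "t \<in> {0..1}" for t
    proof -
      have "\<bar>x t\<bar> \<le> Mx" using Mx(2) t by blast
      then show ?thesis using est[OF t] small unfolding R_def by linarith
    qed
    have xbnd: "\<bar>x t\<bar> \<le> R" if t: "t \<in> {0..1}" for t
    proof -
      have "\<bar>x t\<bar> \<le> Mx" using Mx(2) t by blast
      then show ?thesis unfolding R_def by linarith
    qed
    have ys: "abel_sol A B y"
      unfolding abel_sol_def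
    proof
      fix t :: real assume t: "t \<in> {0..1}"
      have "Fm A B R t (y t) = A t * (y t)^3 + B t * (y t)^2"
        using ybnd[OF t] by (simp add: Fm_def clamp_id)
      then show "(y has_real_derivative A t * (y t)^3 + B t * (y t)^2) (at t within {0..1})"
        using dy[OF t] by simp
    qed
    show "\<exists>y. abel_sol A B y \<and> y 0 = x0 \<and>
      (\<forall>t\<in>{0..1}. \<bar>y t - x t\<bar> \<le> exp L * \<bar>x0 - x 0\<bar> \<and> \<bar>y t\<bar> \<le> R \<and> \<bar>x t\<bar> \<le> R)"
      using ys y0 est ybnd xbnd by blast
  qed
  show ?thesis
    by (rule exI[of _ "exp (- L)"], rule conjI, simp, rule exI[of _ "exp L"], rule conjI, simp,
        rule exI[of _ R]) (use main in blast)
qed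

lemma poincare_eq:
  assumes cA: "continuous_on {0..1} A" and cB: "continuous_on {0..1} B"
    and ys: "abel_sol A B y"
  shows "poincare A B (y 0) = y 1"
  unfolding poincare_def
proof (rule the_equality)
  show "\<exists>x. abel_sol A B x \<and> x 0 = y 0 \<and> x 1 = y 1" using ys by blast
  fix z assume "\<exists>x. abel_sol A B x \<and> x 0 = y 0 \<and> x 1 = z"
  then obtain x where x: "abel_sol A B x" "x 0 = y 0" "x 1 = z" by blast
  show "z = y 1" using sol_unique[OF cA cB x(1) ys, of 1] x by simp
qed

lemma hyper:
  assumes cA: "continuous_on {0..1} A" and cB: "continuous_on {0..1} B"
    and hC: "\<And>t. t \<in> {0..1} \<Longrightarrow> a * A t + b * B t \<ge> 0"
    and t0: "t0 \<in> {0..1}" "a * A t0 + b * B t0 \<noteq> 0"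
    and x: "periodic_orbit A B x" and nz: "nonzero_orbit x"
  shows "hyperbolic A B (x 0)"
proof -
  have xs: "abel_sol A B x" and x1: "x 1 = x 0" using x by (auto simp: periodic_orbit_def)
  have cx: "continuous_on {0..1} x" by (rule sol_cont[OF xs])
  obtain \<eta> C R where eta: "\<eta> > 0" and C: "C \<ge> 0" and near: "\<And>x0. \<bar>x0 - x 0\<bar> < \<eta> \<Longrightarrow>
     (\<exists>y. abel_sol A B y \<and> y 0 = x0 \<and>
     (\<forall>t\<in>{0..1}. \<bar>y t - x t\<bar> \<le> C * \<bar>x0 - x 0\<bar> \<and> \<bar>y t\<bar> \<le> R \<and> \<bar>x t\<bar> \<le> R))"
    using near_solution[OF cA cB xs] by blast
  obtain MA where MA: "MA \<ge> 0" "\<forall>s\<in>{0..1}. \<bar>A s\<bar> \<le> MA" using cont_bound[OF cA] by auto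
  obtain MB where MB: "MB \<ge> 0" "\<forall>s\<in>{0..1}. \<bar>B s\<bar> \<le> MB" using cont_bound[OF cB] by auto
  define g where "g y s = A s * ((x s)^2 + x s * y s + (y s)^2) + B s * (x s + y s)" for y :: "real \<Rightarrow> real" and s
  define J0 where "J0 = integral {0..1} (g x)"
  define K where "K = (3 * MA * \<bar>R\<bar> + MB) * C"
  have K: "K \<ge> 0" using MA MB C by (simp add: K_def)
  have key: "\<exists>J. (poincare A B (x 0 + h) - poincare A B (x 0)) / h = exp J \<and> \<bar>J - J0\<bar> \<le> K * \<bar>h\<bar>"
    if h: "h \<noteq> 0" "\<bar>h\<bar> < \<eta>" for h
  proof -
    obtain y where ys: "abel_sol A B y" and y0: "y 0 = x 0 + h"
      and yb: "\<And>t. t \<in> {0..1} \<Longrightarrow> \<bar>y t - x t\<bar> \<le> C * \<bar>h\<bar> \<and> \<bar>y t\<bar> \<le> R \<and> \<bar>x t\<bar> \<le> R"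
      using near[of "x 0 + h"] h by auto
    have cy: "continuous_on {0..1} y" by (rule sol_cont[OF ys])
    have p1: "poincare A B (x 0 + h) = y 1" using poincare_eq[OF cA cB ys] y0 by simp
    have p0: "poincare A B (x 0) = x 0" using poincare_eq[OF cA cB xs] x1 by simp
    have "y 1 - x 1 = (y 0 - x 0) * exp (integral {0..1} (g y))"
      using sol_diff[OF cA cB xs ys, of 1] by (simp add: g_def[abs_def])
    then have q: "(poincare A B (x 0 + h) - poincare A B (x 0)) / h = exp (integral {0..1} (g y))"
      using h(1) p1 p0 x1 y0 by simp
    have cg: "continuous_on {0..1} (g z)" if "continuous_on {0..1} z" for z
      unfolding g_def by (intro continuous_intros cA cB cx that)
    have pt: "\<bar>g y s - g x s\<bar> \<le> K * \<bar>h\<bar>" if s: "s \<in> {0..1}" for s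
    proof -
      have e: "g y s - g x s = (y s - x s) * (A s * (y s + 2 * x s) + B s)"
        by (simp add: g_def algebra_simps power2_eq_square)
      have "\<bar>y s + 2 * x s\<bar> \<le> 3 * \<bar>R\<bar>" using yb[OF s] by linarith
      then have "\<bar>A s\<bar> * \<bar>y s + 2 * x s\<bar> \<le> MA * (3 * \<bar>R\<bar>)"
        using MA s by (intro mult_mono) auto
      moreover have "\<bar>B s\<bar> \<le> MB" using MB(2) s by blast
      moreover have "\<bar>A s * (y s + 2 * x s) + B s\<bar> \<le> \<bar>A s\<bar> * \<bar>y s + 2 * x s\<bar> + \<bar>B s\<bar>"
        using abs_triangle_ineq[of "A s * (y s + 2 * x s)" "B s"] by (simp add: abs_mult)
      ultimately have f2: "\<bar>A s * (y s + 2 * x s) + B s\<bar> \<le> 3 * MA * \<bar>R\<bar> + MB"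
        by linarith
      have "\<bar>g y s - g x s\<bar> = \<bar>y s - x s\<bar> * \<bar>A s * (y s + 2 * x s) + B s\<bar>"
        unfolding e by (simp add: abs_mult)
      also have "\<dots> \<le> (C * \<bar>h\<bar>) * (3 * MA * \<bar>R\<bar> + MB)"
        using yb[OF s] f2 by (intro mult_mono) auto
      finally show ?thesis by (simp add: K_def algebra_simps)
    qed
    have "integral {0..1} (g y) - J0 = integral {0..1} (\<lambda>s. g y s - g x s)"
      unfolding J0_def
      by (rule Henstock_Kurzweil_Integration.integral_diff[symmetric])
         (intro integrable_continuous_interval cg cy cx)+
    moreover have "norm (integral {0..1} (\<lambda>s. g y s - g x s)) \<le> integral {0..1} (\<lambda>_::real. K * \<bar>h\<bar>)"
    proof -
      have i1: "(\<lambda>s. g y s - g x s) integrable_on {0..1}"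
        by (intro integrable_diff integrable_continuous_interval cg cy cx)
      have i2: "(\<lambda>_::real. K * \<bar>h\<bar>) integrable_on {0..1}" by (rule integrable_const_ivl)
      show ?thesis by (rule integral_norm_bound_integral[OF i1 i2]) (use pt in auto)
    qed
    ultimately have "\<bar>integral {0..1} (g y) - J0\<bar> \<le> K * \<bar>h\<bar>" by simp
    then show ?thesis using q by blast
  qed
  have deriv: "(poincare A B has_real_derivative exp J0) (at (x 0))"
    unfolding DERIV_def LIM_eq
  proof (intro allI impI)
    fix r :: real assume r: "r > 0"
    have "isCont exp J0" by simp
    then obtain s' where s': "s' > 0" "\<And>J. J \<noteq> J0 \<and> norm (J - J0) < s' \<Longrightarrow> norm (exp J - exp J0) < r"
      unfolding isCont_def LIM_eq using r by blast
    define s where "s = min \<eta> (s' / (K + 1))"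
    have s: "s > 0" using eta s' K by (simp add: s_def)
    show "\<exists>s>0. \<forall>h. h \<noteq> 0 \<and> norm (h - 0) < s \<longrightarrow>
        norm ((poincare A B (x 0 + h) - poincare A B (x 0)) / h - exp J0) < r"
    proof (intro exI[of _ s] conjI allI impI s)
      fix h :: real assume hh: "h \<noteq> 0 \<and> norm (h - 0) < s"
      then have h: "h \<noteq> 0" "\<bar>h\<bar> < \<eta>" "\<bar>h\<bar> < s' / (K + 1)" by (auto simp: s_def)
      obtain J where J: "(poincare A B (x 0 + h) - poincare A B (x 0)) / h = exp J"
        "\<bar>J - J0\<bar> \<le> K * \<bar>h\<bar>" using key[OF h(1,2)] by blast
      have "K * \<bar>h\<bar> \<le> K * (s' / (K + 1))" using h(3) K by (intro mult_left_mono) auto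
      also have "\<dots> < s'" using K s' by (simp add: field_simps)
      finally have "\<bar>J - J0\<bar> < s'" using J(2) by linarith
      then have "norm (exp J - exp J0) < r"
        using s'(2)[of J] r by (cases "J = J0") auto
      then show "norm ((poincare A B (x 0 + h) - poincare A B (x 0)) / h - exp J0) < r"
        using J(1) by simp
    qed
  qed
  have J0ne: "J0 \<noteq> 0"
  proof -
    have eqf: "g x = (\<lambda>s. A s * (x s)^2 + 2 * (A s * (x s)^2 + B s * x s))"
      by (rule ext) (simp add: g_def algebra_simps power2_eq_square)
    have i1: "(\<lambda>s. A s * (x s)^2) integrable_on {0..1}"
      by (intro integrable_continuous_interval continuous_intros cA cx)
    have i2: "(\<lambda>s. 2 * (A s * (x s)^2 + B s * x s)) integrable_on {0..1}"
      by (intro integrable_continuous_interval continuous_intros cA cB cx)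
    have "J0 = integral {0..1} (\<lambda>s. A s * (x s)^2) + integral {0..1} (\<lambda>s. 2 * (A s * (x s)^2 + B s * x s))"
      unfolding J0_def eqf by (rule Henstock_Kurzweil_Integration.integral_add[OF i1 i2])
    also have "integral {0..1} (\<lambda>s. 2 * (A s * (x s)^2 + B s * x s)) = 0"
      unfolding Henstock_Kurzweil_Integration.integral_mult_right
      using orbit_nonzero(3)[OF cA cB x nz] by simp
    finally have "J0 = integral {0..1} (\<lambda>s. A s * (x s)^2)" by simp
    then show ?thesis using z_sign(1)[OF cA cB hC t0 x nz] by simp
  qed
  show ?thesis unfolding hyperbolic_def
    using deriv J0ne by (intro exI[of _ "exp J0"]) simp
qed

lemma smooth_cont:
  assumes "smooth01 f"
  shows "continuous_on {0..1} f"
proof -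
  obtain D where D: "D 0 = f" "\<forall>n. \<forall>t\<in>{0..1}. (D n has_real_derivative D (Suc n) t) (at t within {0..1})"
    using assms unfolding smooth01_def by blast
  have "continuous_on {0..1} (D 0)"
    by (rule DERIV_continuous_on) (use D(2) in blast)
  then show ?thesis using D(1) by simp
qed

lemma core:
  assumes cA: "continuous_on {0..1} A" and cB: "continuous_on {0..1} B"
    and hC: "\<And>t. t \<in> {0..1} \<Longrightarrow> a * A t + b * B t \<ge> 0"
    and t0: "t0 \<in> {0..1}" "a * A t0 + b * B t0 \<noteq> 0"
  shows "(\<forall>x y. periodic_orbit A B x \<and> nonzero_orbit x \<and> periodic_orbit A B y \<and> nonzero_orbit y
            \<longrightarrow> (\<forall>t\<in>{0..1}. x t = y t))
       \<and> (\<forall>x. periodic_orbit A B x \<and> nonzero_orbit x \<longrightarrow> hyperbolic A B (x 0))"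
  using orbit_unique[OF cA cB hC t0] hyper[OF cA cB hC t0] by blast

theorem theoremA:
  fixes A B :: "real \<Rightarrow> real" and a b :: real
  assumes "smooth01 A" and "smooth01 B"
    and "\<exists>t\<in>{0..1}. a * A t + b * B t \<noteq> 0"
    and "(\<forall>t\<in>{0..1}. a * A t + b * B t \<ge> 0) \<or> (\<forall>t\<in>{0..1}. a * A t + b * B t \<le> 0)"
  shows "(\<forall>x y. periodic_orbit A B x \<and> nonzero_orbit x \<and> periodic_orbit A B y \<and> nonzero_orbit y
            \<longrightarrow> (\<forall>t\<in>{0..1}. x t = y t))
       \<and> (\<forall>x. periodic_orbit A B x \<and> nonzero_orbit x \<longrightarrow> hyperbolic A B (x 0))"
proof -
  have cA: "continuous_on {0..1} A" by (rule smooth_cont[OF assms(1)])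
  have cB: "continuous_on {0..1} B" by (rule smooth_cont[OF assms(2)])
  obtain t0 where t0: "t0 \<in> {0..1}" "a * A t0 + b * B t0 \<noteq> 0" using assms(3) by blast
  from assms(4) show ?thesis
  proof
    assume h: "\<forall>t\<in>{0..1}. a * A t + b * B t \<ge> 0"
    show ?thesis by (rule core[OF cA cB _ t0]) (use h in blast)
  next
    assume h: "\<forall>t\<in>{0..1}. a * A t + b * B t \<le> 0"
    have h': "\<And>t. t \<in> {0..1} \<Longrightarrow> (- a) * A t + (- b) * B t \<ge> 0" using h by force
    have t0': "(- a) * A t0 + (- b) * B t0 \<noteq> 0" using t0(2) by linarith
    show ?thesis by (rule core[OF cA cB h' t0(1) t0'])
  qed
qed

end
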